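(* Let $X$ be a real Hilbert space, let $\alpha\in\mathbb{R}\setminus\{0\}$ and $\beta>0$, equip $X\times X\times\mathbb{R}$ with the norm $\|(u,v,\gamma)\|=\sqrt{\|u\|^2+\|v\|^2+\beta^2|\gamma|^2}$, and let $\widetilde{C}_\alpha=\{(u,v,\gamma)\in X\times X\times\mathbb{R}: \|u\|^2-\|v\|^2=2\alpha\gamma\}$. Let $(u_0,v_0,\gamma_0)\in X\times X\times\mathbb{R}$. Then the problem of minimizing $f(u,v,\gamma)=\|u-u_0\|^2+\|v-v_0\|^2+\beta^2|\gamma-\gamma_0|^2$ subject to $\|u\|^2-\|v\|^2-2\alpha\gamma=0$ always has a solution, i.e., $P_{\widetilde{C}_\alpha}(u_0,v_0,\gamma_0)\neq\varnothing$. Moreover, if $(u,v,\gamma)\in P_{\widetilde{C}_\alpha}(u_0,v_0,\gamma_0)$, then $u,u_0$ are conically dependent and $v,v_0$ are conically dependent.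
   Context: $P_S(z)=\operatorname{argmin}_{w\in S}\|w-z\|$ with respect to the weighted norm above. Two vectors $x,x_0\in X$ are conically dependent if there exists $s\geq0$ such that $x=sx_0$ or $x_0=sx$. *)

theory Defs
  imports "HOL-Analysis.Analysis"
begin

definition wnorm :: "real \<Rightarrow> ('a::real_inner \<times> 'a \<times> real) \<Rightarrow> real" where
  "wnorm \<beta> w = (case w of (u, v, \<gamma>) \<Rightarrow>
      sqrt ((norm u)\<^sup>2 + (norm v)\<^sup>2 + \<beta>\<^sup>2 * \<bar>\<gamma>\<bar>\<^sup>2))"

definition Ctilde :: "real \<Rightarrow> ('a::real_inner \<times> 'a \<times> real) set" where
  "Ctilde \<alpha> = {(u, v, \<gamma>). (norm u)\<^sup>2 - (norm v)\<^sup>2 = 2 * \<alpha> * \<gamma>}"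

definition wproj :: "real \<Rightarrow> ('a::real_inner \<times> 'a \<times> real) set \<Rightarrow> ('a \<times> 'a \<times> real) \<Rightarrow> ('a \<times> 'a \<times> real) set" where
  "wproj \<beta> S z = {w \<in> S. \<forall>w'\<in>S. wnorm \<beta> (w - z) \<le> wnorm \<beta> (w' - z)}"

definition conically_dependent :: "'a::real_vector \<Rightarrow> 'a \<Rightarrow> bool" where
  "conically_dependent x x0 \<longleftrightarrow> (\<exists>s::real. s \<ge> 0 \<and> (x = s *\<^sub>R x0 \<or> x0 = s *\<^sub>R x))"

end

theory Submission
  imports Defs
begin

lemma wnorm_diff:
  "wnorm \<beta> ((u, v, \<gamma>) - (u0, v0, \<gamma>0)) =
     sqrt ((norm (u - u0))\<^sup>2 + (norm (v - v0))\<^sup>2 + \<beta>\<^sup>2 * (\<gamma> - \<gamma>0)\<^sup>2)"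
  by (simp add: wnorm_def)

lemma ray_point:
  fixes u0 :: "'a::real_inner"
  assumes "a \<in> range (norm :: 'a \<Rightarrow> real)"
  shows "\<exists>u::'a. norm u = a \<and> norm (u - u0) = \<bar>a - norm u0\<bar>"
proof (cases "u0 = 0")
  case True
  then show ?thesis using assms by auto
next
  case False
  have a0: "a \<ge> 0" using assms by auto
  have e: "u0 = norm u0 *\<^sub>R sgn u0" using False by (simp add: sgn_div_norm)
  have "a *\<^sub>R sgn u0 - u0 = (a - norm u0) *\<^sub>R sgn u0"
    by (subst (2) e) (simp add: algebra_simps)
  then show ?thesis using False a0
    by (intro exI[of _ "a *\<^sub>R sgn u0"]) (simp add: norm_sgn)
qed

lemma range_norm_closed: "closed (range (norm :: 'a::real_normed_vector \<Rightarrow> real))"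
proof (cases "\<exists>x::'a. x \<noteq> 0")
  case True
  then obtain x :: 'a where x: "x \<noteq> 0" by blast
  have "range (norm :: 'a \<Rightarrow> real) = {0..}"
  proof
    show "range (norm :: 'a \<Rightarrow> real) \<subseteq> {0..}" by auto
    show "{0..} \<subseteq> range (norm :: 'a \<Rightarrow> real)"
    proof
      fix t :: real assume "t \<in> {0..}"
      then have "norm (t *\<^sub>R sgn x) = t" using x by (simp add: norm_sgn)
      then show "t \<in> range (norm :: 'a \<Rightarrow> real)" by (metis rangeI)
    qed
  qed
  then show ?thesis by simp
next
  case False
  then have "range (norm :: 'a \<Rightarrow> real) = {0}" by auto
  then show ?thesis by simp
qed

lemma sq_le: "(norm u - norm u0)\<^sup>2 \<le> (norm (u - u0))\<^sup>2"
proof -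
  have "\<bar>norm u - norm u0\<bar>\<^sup>2 \<le> (norm (u - u0))\<^sup>2"
    by (rule power_mono[OF norm_triangle_ineq3]) simp
  then show ?thesis by simp
qed

theorem mainTheorem3:
  fixes \<alpha> \<beta> \<gamma>0 :: real and u0 v0 :: "'a::{real_inner, complete_space}"
  assumes "\<alpha> \<noteq> 0" and "\<beta> > 0"
  shows "wproj \<beta> (Ctilde \<alpha>) (u0, v0, \<gamma>0) \<noteq> {} \<and>
    (\<forall>u v \<gamma>. (u, v, \<gamma>) \<in> wproj \<beta> (Ctilde \<alpha>) (u0, v0, \<gamma>0) \<longrightarrow>
       conically_dependent u u0 \<and> conically_dependent v v0)"
proof
  define R where "R = range (norm :: 'a \<Rightarrow> real)"
  define g where "g = (\<lambda>p::real\<times>real. (fst p - norm u0)\<^sup>2 + (snd p - norm v0)\<^sup>2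
       + \<beta>\<^sup>2 * (((fst p)\<^sup>2 - (snd p)\<^sup>2) / (2 * \<alpha>) - \<gamma>0)\<^sup>2)"
  define M where "M = g (0, 0)"
  define K where "K = (R \<times> R) \<inter> {p. g p \<le> M}"
  have contg: "continuous_on UNIV g" unfolding g_def
    using assms(1) by (intro continuous_intros) auto
  have clR: "closed R" unfolding R_def by (rule range_norm_closed)
  have clK: "closed K" unfolding K_def
    by (intro closed_Int closed_Times clR closed_Collect_le contg continuous_on_const)
  have M0: "M \<ge> 0" unfolding M_def g_def by simp
  have bK: "bounded K"
  proof -
    have "K \<subseteq> cball 0 (norm u0 + norm v0 + 2 * sqrt M)"
    proof
      fix p assume pK: "p \<in> K"
      obtain a b where p: "p = (a, b)" by (cases p)
      have gp: "g (a, b) \<le> M" using pK p K_def by auto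
      have nn1: "0 \<le> \<beta>\<^sup>2 * (((a)\<^sup>2 - (b)\<^sup>2) / (2 * \<alpha>) - \<gamma>0)\<^sup>2" by simp
      have nn2: "0 \<le> (a - norm u0)\<^sup>2" "0 \<le> (b - norm v0)\<^sup>2" by simp_all
      have ge: "g (a, b) = (a - norm u0)\<^sup>2 + (b - norm v0)\<^sup>2 + \<beta>\<^sup>2 * (((a)\<^sup>2 - (b)\<^sup>2) / (2 * \<alpha>) - \<gamma>0)\<^sup>2"
        by (simp add: g_def)
      have "(a - norm u0)\<^sup>2 \<le> M" using gp nn1 nn2 ge by linarith
      then have "\<bar>a - norm u0\<bar> \<le> sqrt M" by (metis real_sqrt_abs real_sqrt_le_mono)
      have "(b - norm v0)\<^sup>2 \<le> M" using gp nn1 nn2 ge by linarith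
      then have "\<bar>b - norm v0\<bar> \<le> sqrt M" by (metis real_sqrt_abs real_sqrt_le_mono)
      have "norm (a, b) \<le> \<bar>a\<bar> + \<bar>b\<bar>"
        by (metis norm_Pair_le real_norm_def)
      show "p \<in> cball 0 (norm u0 + norm v0 + 2 * sqrt M)"
      proof -
        have "norm (a, b) \<le> norm u0 + norm v0 + 2 * sqrt M"
          using \<open>norm (a, b) \<le> \<bar>a\<bar> + \<bar>b\<bar>\<close> \<open>\<bar>a - norm u0\<bar> \<le> sqrt M\<close>
            \<open>\<bar>b - norm v0\<bar> \<le> sqrt M\<close> norm_ge_zero[of u0] norm_ge_zero[of v0] by linarith
        then show ?thesis using p by (simp add: mem_cball_0)
      qed
    qed
    then show ?thesis using bounded_cball bounded_subset by blast
  qed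
  have cK: "compact K" using clK bK by (simp add: compact_eq_bounded_closed)
  have neK: "(0, 0) \<in> K" unfolding K_def R_def M_def by (auto intro: rangeI[of _ 0, simplified])
  obtain p where pK: "p \<in> K" and pmin: "\<And>q. q \<in> K \<Longrightarrow> g p \<le> g q"
    using continuous_attains_inf[OF cK _ continuous_on_subset[OF contg]] neK by blast
  obtain a b where p: "p = (a, b)" by (cases p)
  have aR: "a \<in> R" and bR: "b \<in> R" using pK p K_def by auto
  obtain u where u: "norm u = a" "norm (u - u0) = \<bar>a - norm u0\<bar>"
    using ray_point[of a u0] aR R_def by blast
  obtain v where v: "norm v = b" "norm (v - v0) = \<bar>b - norm v0\<bar>"
    using ray_point[of b v0] bR R_def by blast
  define \<gamma> where "\<gamma> = (a\<^sup>2 - b\<^sup>2) / (2 * \<alpha>)"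
  have inC: "(u, v, \<gamma>) \<in> Ctilde \<alpha>" using u v assms(1) unfolding Ctilde_def \<gamma>_def by simp
  have gval: "(norm (u - u0))\<^sup>2 + (norm (v - v0))\<^sup>2 + \<beta>\<^sup>2 * (\<gamma> - \<gamma>0)\<^sup>2 = g (a, b)"
    using u v unfolding g_def \<gamma>_def by simp
  have "(u, v, \<gamma>) \<in> wproj \<beta> (Ctilde \<alpha>) (u0, v0, \<gamma>0)"
    unfolding wproj_def
  proof (intro CollectI conjI inC ballI)
    fix w' :: "'a \<times> 'a \<times> real" assume w': "w' \<in> Ctilde \<alpha>"
    obtain u' v' \<gamma>' where w'e: "w' = (u', v', \<gamma>')" by (cases w') auto
    have c: "(norm u')\<^sup>2 - (norm v')\<^sup>2 = 2 * \<alpha> * \<gamma>'" using w' w'e by (simp add: Ctilde_def)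
    have g'eq: "\<gamma>' = ((norm u')\<^sup>2 - (norm v')\<^sup>2) / (2 * \<alpha>)" using c assms(1) by simp
    have "g (norm u', norm v') \<le> (norm (u' - u0))\<^sup>2 + (norm (v' - v0))\<^sup>2 + \<beta>\<^sup>2 * (\<gamma>' - \<gamma>0)\<^sup>2"
      unfolding g_def using sq_le[of u' u0] sq_le[of v' v0] g'eq by simp
    moreover have "g (a, b) \<le> g (norm u', norm v')"
    proof (cases "g (norm u', norm v') \<le> M")
      case True
      then have "(norm u', norm v') \<in> K" unfolding K_def R_def by auto
      then show ?thesis using pmin p by auto
    next
      case False
      then show ?thesis using pmin[OF neK] p M_def by auto
    qed
    ultimately show "wnorm \<beta> ((u, v, \<gamma>) - (u0, v0, \<gamma>0)) \<le> wnorm \<beta> (w' - (u0, v0, \<gamma>0))"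
      unfolding w'e wnorm_diff using gval by simp
  qed
  then show "wproj \<beta> (Ctilde \<alpha>) (u0, v0, \<gamma>0) \<noteq> {}" by blast
next
  show "\<forall>u v \<gamma>. (u, v, \<gamma>) \<in> wproj \<beta> (Ctilde \<alpha>) (u0, v0, \<gamma>0) \<longrightarrow>
       conically_dependent u u0 \<and> conically_dependent v v0"
  proof (intro allI impI)
    fix u v \<gamma> assume h: "(u, v, \<gamma>) \<in> wproj \<beta> (Ctilde \<alpha>) (u0, v0, \<gamma>0)"
    have inC: "(u, v, \<gamma>) \<in> Ctilde \<alpha>" using h wproj_def by blast
    have mn: "\<And>w'. w' \<in> Ctilde \<alpha> \<Longrightarrow>
       wnorm \<beta> ((u, v, \<gamma>) - (u0, v0, \<gamma>0)) \<le> wnorm \<beta> (w' - (u0, v0, \<gamma>0))"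
      using h unfolding wproj_def by blast
    have cd: "conically_dependent x x0"
      if key: "\<And>y::'a. norm y = norm x \<Longrightarrow> (norm (x - x0))\<^sup>2 \<le> (norm (y - x0))\<^sup>2"
      for x x0 :: 'a
    proof (cases "x0 = 0")
      case True
      then show ?thesis unfolding conically_dependent_def
        by (intro exI[of _ 0]) simp
    next
      case False
      obtain y where y: "norm y = norm x" "norm (y - x0) = \<bar>norm x - norm x0\<bar>"
        using ray_point[of "norm x" x0] by blast
      have "(norm (x - x0))\<^sup>2 \<le> (norm x - norm x0)\<^sup>2" using key[OF y(1)] y(2) by simp
      moreover have "(norm (x - x0))\<^sup>2 = (norm x)\<^sup>2 - 2 * (x \<bullet> x0) + (norm x0)\<^sup>2"
        by (simp add: power2_norm_eq_inner inner_diff_left inner_diff_right inner_commute)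
      moreover have "(norm x - norm x0)\<^sup>2 = (norm x)\<^sup>2 - 2 * (norm x * norm x0) + (norm x0)\<^sup>2"
        by (simp add: power2_diff)
      ultimately have "x \<bullet> x0 \<ge> norm x * norm x0" by linarith
      then have "x \<bullet> x0 = norm x * norm x0" using norm_cauchy_schwarz[of x x0] by linarith
      then have "norm x *\<^sub>R x0 = norm x0 *\<^sub>R x" by (simp add: norm_cauchy_schwarz_eq)
      then have "x = (norm x / norm x0) *\<^sub>R x0" using False
        by (metis (no_types, lifting) divide_inverse_commute norm_eq_zero right_inverse
            scaleR_one scaleR_scaleR mult.commute)
      then show ?thesis unfolding conically_dependent_def
        by (intro exI[of _ "norm x / norm x0"]) simp
    qed
    have c: "(norm u)\<^sup>2 - (norm v)\<^sup>2 = 2 * \<alpha> * \<gamma>" using inC by (simp add: Ctilde_def)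
    have "conically_dependent u u0"
    proof (rule cd)
      fix y :: 'a assume y: "norm y = norm u"
      have "(y, v, \<gamma>) \<in> Ctilde \<alpha>" using c y by (simp add: Ctilde_def)
      from mn[OF this] show "(norm (u - u0))\<^sup>2 \<le> (norm (y - u0))\<^sup>2"
        unfolding wnorm_diff by simp
    qed
    moreover have "conically_dependent v v0"
    proof (rule cd)
      fix y :: 'a assume y: "norm y = norm v"
      have "(u, y, \<gamma>) \<in> Ctilde \<alpha>" using c y by (simp add: Ctilde_def)
      from mn[OF this] show "(norm (v - v0))\<^sup>2 \<le> (norm (y - v0))\<^sup>2"
        unfolding wnorm_diff by simp
    qed
    ultimately show "conically_dependent u u0 \<and> conically_dependent v v0" by blast
  qed
qed

end
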